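(* Let $\succeq$ be a complete and transitive preference relation on $\mathcal{L}$ that is continuous with respect to convergence in probability, satisfies state-wise monotonicity, and is regret based. Then for any $X,Y\in\mathcal{L}$ with $F_X=F_Y$ (i.e., $X$ and $Y$ have the same cumulative distribution function), we have $X\sim Y$ (i.e., $X\succeq Y$ and $Y\succeq X$).
   Context: Fix a bounded interval of outcomes $[\underline x,\bar x]\subset\mathbb{R}$. Let $(S,\Sigma,\mathrm{P})$ be the probability space with $S=[0,1]$, $\Sigma$ the Borel $\sigma$-algebra on $[0,1]$, and $\mathrm{P}$ Lebesgue measure. $\mathcal{L}$ is the set of measurable random variables $X:S\to[\underline x,\bar x]$ taking only finitely many values; such $X$ is written $X=(x_1,S_1;\ldots;x_n,S_n)$, meaning $X=x_i$ on the event $S_i$, where $S_1,\ldots,S_n$ is a measurable partition of $S$. $F_X$ denotes the cdf of $X$. A preference relation $\succeq$ on $\mathcal{L}$ is a binary relation; $\succ$ and $\sim$ are its strict and indifference parts. A regret function is a continuous $\psi:[\underline x,\bar x]\times[\underline x,\bar x]\to\mathbb{R}$ with $\psi(x,x)=0$ for all $x$, $\psi(x,y)$ strictly increasing in $x$ and strictly decreasing in $y$. For $X=(x_1,S_1;\ldots;x_n,S_n)$ and $Y=(y_1,S_1;\ldots;y_n,S_n)$ written on a common partition, the regret lottery is the finite-support lottery $\Psi(X,Y)=(\psi(x_1,y_1),p_1;\ldots;\psi(x_n,y_n),p_n)$ with $p_i=\mathrm{P}(S_i)$ (i.e., the distribution of $s\mapsto\psi(X(s),Y(s))$). The relation $\succeq$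 is regret based if there exist a regret function $\psi$ and a continuous real-valued functional $V$ defined on the set of regret lotteries $\{\Psi(X,Y):X,Y\in\mathcal{L}\}$ such that for all $X,Y\in\mathcal{L}$: $X\succeq Y$ iff $V(\Psi(X,Y))\geqslant 0$. A sequence $X^k\in\mathcal{L}$ converges in probability to $X\in\mathcal{L}$ if for every $\varepsilon>0$, $\lim_{k\to\infty}\mathrm{P}(|X^k-X|\geqslant\varepsilon)=0$. $\succeq$ is continuous with respect to convergence in probability if, whenever $X^k\to X$ in probability: $X^k\succeq Y$ for all $k$ implies $X\succeq Y$, and $Y\succeq X^k$ for all $k$ implies $Y\succeq X$. $\succeq$ satisfies state-wise monotonicity if for any measurable partition $S_1,\ldots,S_n$ of $S$ and any $X=(x_1,S_1;\ldots;x_n,S_n)$, $Y=(y_1,S_1;\ldots;y_n,S_n)$ with $x_i\geqslant y_i$ for all $i$ and at least one strict inequality, $X\succ Y$. *)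

theory Defs
  imports "HOL-Probability.Probability"
begin

definition PS :: "real measure" where
  "PS = restrict_space lborel {0..1}"

text \<open>Simple random variables with values in [xl, xh] (only values on S = [0,1] matter).\<close>
definition lotteries :: "real \<Rightarrow> real \<Rightarrow> (real \<Rightarrow> real) set" where
  "lotteries xl xh = {X. X \<in> borel_measurable PS \<and> X ` {0..1} \<subseteq> {xl..xh} \<and> finite (X ` {0..1})}"

definition cdf_of :: "(real \<Rightarrow> real) \<Rightarrow> real \<Rightarrow> real" where
  "cdf_of X = cdf (distr PS borel X)"

definition strict_pref :: "((real \<Rightarrow> real) \<Rightarrow> (real \<Rightarrow> real) \<Rightarrow> bool) \<Rightarrow> (real \<Rightarrow> real) \<Rightarrow> (real \<Rightarrow> real) \<Rightarrow> bool" where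
  "strict_pref R X Y \<longleftrightarrow> R X Y \<and> \<not> R Y X"

definition complete_pref :: "real \<Rightarrow> real \<Rightarrow> ((real \<Rightarrow> real) \<Rightarrow> (real \<Rightarrow> real) \<Rightarrow> bool) \<Rightarrow> bool" where
  "complete_pref xl xh R \<longleftrightarrow> (\<forall>X\<in>lotteries xl xh. \<forall>Y\<in>lotteries xl xh. R X Y \<or> R Y X)"

definition transitive_pref :: "real \<Rightarrow> real \<Rightarrow> ((real \<Rightarrow> real) \<Rightarrow> (real \<Rightarrow> real) \<Rightarrow> bool) \<Rightarrow> bool" where
  "transitive_pref xl xh R \<longleftrightarrow> (\<forall>X\<in>lotteries xl xh. \<forall>Y\<in>lotteries xl xh. \<forall>Z\<in>lotteries xl xh.
      R X Y \<longrightarrow> R Y Z \<longrightarrow> R X Z)"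

definition conv_in_prob :: "(nat \<Rightarrow> real \<Rightarrow> real) \<Rightarrow> (real \<Rightarrow> real) \<Rightarrow> bool" where
  "conv_in_prob Xs X \<longleftrightarrow> (\<forall>\<epsilon>>0. (\<lambda>k. measure PS {s \<in> space PS. \<bar>Xs k s - X s\<bar> \<ge> \<epsilon>}) \<longlonglongrightarrow> 0)"

definition continuous_in_prob :: "real \<Rightarrow> real \<Rightarrow> ((real \<Rightarrow> real) \<Rightarrow> (real \<Rightarrow> real) \<Rightarrow> bool) \<Rightarrow> bool" where
  "continuous_in_prob xl xh R \<longleftrightarrow>
     (\<forall>Xs X Y. (\<forall>k. Xs k \<in> lotteries xl xh) \<and> X \<in> lotteries xl xh \<and> Y \<in> lotteries xl xh \<and> conv_in_prob Xs X \<longrightarrow>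
        ((\<forall>k. R (Xs k) Y) \<longrightarrow> R X Y) \<and> ((\<forall>k. R Y (Xs k)) \<longrightarrow> R Y X))"

text \<open>State-wise monotonicity: X = (x_1,S_1;...;x_n,S_n), Y = (y_1,S_1;...;y_n,S_n) on a
  measurable partition S_1..S_n of [0,1] into events of positive probability.\<close>
definition statewise_monotone :: "real \<Rightarrow> real \<Rightarrow> ((real \<Rightarrow> real) \<Rightarrow> (real \<Rightarrow> real) \<Rightarrow> bool) \<Rightarrow> bool" where
  "statewise_monotone xl xh R \<longleftrightarrow>
     (\<forall>(n::nat) (P :: nat \<Rightarrow> real set) (x :: nat \<Rightarrow> real) (y :: nat \<Rightarrow> real) X Y.
        X \<in> lotteries xl xh \<and> Y \<in> lotteries xl xh \<and>
        (\<forall>i<n. P i \<in> sets PS \<and> measure PS (P i) > 0) \<and>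
        (\<forall>i<n. \<forall>j<n. i \<noteq> j \<longrightarrow> P i \<inter> P j = {}) \<and>
        (\<Union>i<n. P i) = {0..1} \<and>
        (\<forall>i<n. \<forall>s\<in>P i. X s = x i \<and> Y s = y i) \<and>
        (\<forall>i<n. x i \<ge> y i) \<and> (\<exists>i<n. x i > y i)
        \<longrightarrow> strict_pref R X Y)"

definition regret_function :: "real \<Rightarrow> real \<Rightarrow> (real \<Rightarrow> real \<Rightarrow> real) \<Rightarrow> bool" where
  "regret_function xl xh \<psi> \<longleftrightarrow>
     continuous_on ({xl..xh} \<times> {xl..xh}) (\<lambda>(x, y). \<psi> x y) \<and>
     (\<forall>x\<in>{xl..xh}. \<psi> x x = 0) \<and>
     (\<forall>y\<in>{xl..xh}. \<forall>x1\<in>{xl..xh}. \<forall>x2\<in>{xl..xh}. x1 < x2 \<longrightarrow> \<psi> x1 y < \<psi> x2 y) \<and>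
     (\<forall>x\<in>{xl..xh}. \<forall>y1\<in>{xl..xh}. \<forall>y2\<in>{xl..xh}. y1 < y2 \<longrightarrow> \<psi> x y2 < \<psi> x y1)"

definition regret_lottery :: "(real \<Rightarrow> real \<Rightarrow> real) \<Rightarrow> (real \<Rightarrow> real) \<Rightarrow> (real \<Rightarrow> real) \<Rightarrow> real measure" where
  "regret_lottery \<psi> X Y = distr PS borel (\<lambda>s. \<psi> (X s) (Y s))"

definition regret_lotteries :: "real \<Rightarrow> real \<Rightarrow> (real \<Rightarrow> real \<Rightarrow> real) \<Rightarrow> real measure set" where
  "regret_lotteries xl xh \<psi> = {regret_lottery \<psi> X Y | X Y. X \<in> lotteries xl xh \<and> Y \<in> lotteries xl xh}"

text \<open>Continuity of a functional on a set of lotteries (topology of weak convergence,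
  which is metrizable here, so sequential continuity is used).\<close>
definition lottery_continuous :: "real measure set \<Rightarrow> (real measure \<Rightarrow> real) \<Rightarrow> bool" where
  "lottery_continuous A V \<longleftrightarrow>
     (\<forall>Ls L. (\<forall>k. Ls k \<in> A) \<and> L \<in> A \<and> weak_conv_m Ls L \<longrightarrow> (\<lambda>k. V (Ls k)) \<longlonglongrightarrow> V L)"

definition regret_based :: "real \<Rightarrow> real \<Rightarrow> ((real \<Rightarrow> real) \<Rightarrow> (real \<Rightarrow> real) \<Rightarrow> bool) \<Rightarrow> bool" where
  "regret_based xl xh R \<longleftrightarrow>
     (\<exists>\<psi> V. regret_function xl xh \<psi> \<and> lottery_continuous (regret_lotteries xl xh \<psi>) V \<and>
        (\<forall>X\<in>lotteries xl xh. \<forall>Y\<in>lotteries xl xh. R X Y \<longleftrightarrow> V (regret_lottery \<psi> X Y) \<ge> 0))"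

end

theory Submission imports Defs begin

lemma space_PS[simp]: "space PS = {0..1}"
  by (simp add: PS_def space_restrict_space)

lemma sets_PS_iff: "A \<in> sets PS \<longleftrightarrow> A \<subseteq> {0..1} \<and> A \<in> sets borel"
  unfolding PS_def by (subst sets_restrict_space_iff) auto

lemma measure_PS: "A \<subseteq> {0..1} \<Longrightarrow> measure PS A = measure lborel A"
  unfolding PS_def by (rule measure_restrict_space) auto

lemma emeasure_PS: "A \<subseteq> {0..1} \<Longrightarrow> emeasure PS A = emeasure lborel A"
  unfolding PS_def by (rule emeasure_restrict_space) auto

lemma prob_space_PS: "prob_space PS"
  by (rule prob_spaceI) (simp add: emeasure_PS)

interpretation PSp: prob_space PS by (rule prob_space_PS)

lemma split_set:
  assumes G: "G \<in> sets PS" and m: "0 \<le> m" "m \<le> measure PS G"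
  shows "\<exists>D\<in>sets PS. D \<subseteq> G \<and> measure PS D = m"
proof -
  have Gb: "G \<in> sets borel" "G \<subseteq> {0..1}" using G by (auto simp: sets_PS_iff)
  define f where "f t = measure PS (G \<inter> {..t})" for t :: real
  have sets_t: "G \<inter> {..t} \<in> sets PS" for t using Gb by (auto simp: sets_PS_iff)
  have lip: "f t' - f t \<le> t' - t" if "t \<le> t'" for t t'
  proof -
    have "G \<inter> {..t'} \<subseteq> (G \<inter> {..t}) \<union> (G \<inter> {t<..t'})" by auto
    hence "f t' \<le> measure PS ((G \<inter> {..t}) \<union> (G \<inter> {t<..t'}))"
      unfolding f_def using Gb by (intro PSp.finite_measure_mono) (auto simp: sets_PS_iff)
    also have "\<dots> \<le> f t + measure PS (G \<inter> {t<..t'})"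
      unfolding f_def using Gb by (intro measure_subadditive) (auto simp: sets_PS_iff PSp.emeasure_eq_measure)
    also have "measure PS (G \<inter> {t<..t'}) = measure lborel (G \<inter> {t<..t'})"
      using Gb by (intro measure_PS) auto
    also have "\<dots> \<le> measure lborel {t<..t'}"
      using Gb that by (intro measure_mono_fmeasurable) (auto simp: fmeasurable_def)
    also have "\<dots> = t' - t" using that by simp
    finally show ?thesis by simp
  qed
  have mono: "f t \<le> f t'" if "t \<le> t'" for t t'
    unfolding f_def using Gb that by (intro PSp.finite_measure_mono) (auto simp: sets_PS_iff)
  have "continuous_on {0..1} f"
    unfolding continuous_on_iff
  proof (intro ballI allI impI)
    fix x e x' :: real assume "0 < e"
    show "\<exists>d>0. \<forall>x'\<in>{0..1}. dist x' x < d \<longrightarrow> dist (f x') (f x) < e"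
    proof (intro exI[of _ e] conjI ballI impI)
      fix y assume "dist y x < e"
      then show "dist (f y) (f x) < e"
        using lip[of x y] lip[of y x] mono[of x y] mono[of y x]
        by (cases "x \<le> y") (auto simp: dist_real_def abs_if split: if_splits)
    qed (use \<open>0 < e\<close> in auto)
  qed
  moreover have "f 0 = 0"
  proof -
    have "G \<inter> {..0} \<subseteq> {0}" using Gb by auto
    hence "f 0 \<le> measure PS {0}" unfolding f_def
      by (intro PSp.finite_measure_mono) (auto simp: sets_PS_iff)
    also have "measure PS {0} = 0" by (subst measure_PS) auto
    finally show ?thesis unfolding f_def using measure_nonneg by (metis antisym)
  qed
  moreover have "f 1 = measure PS G" unfolding f_def using Gb
    by (metis inf.absorb_iff1 atLeastAtMost_iff atMost_iff subset_eq)
  ultimately obtain t where "0 \<le> t" "t \<le> 1" "f t = m"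
    using IVT'[of f 0 m 1] m by auto
  thus ?thesis using sets_t unfolding f_def by blast
qed


lemma piece_vimage:
  assumes "\<forall>s\<in>\<Omega>. f s = (if s\<in>E then c1 else if s\<in>D then c2 else c0)"
    and "E \<subseteq> \<Omega>" "D \<subseteq> \<Omega>" "E \<inter> D = {}"
  shows "f -` A \<inter> \<Omega> = (if c0\<in>A then \<Omega>-E-D else {}) \<union> (if c1\<in>A then E else {}) \<union> (if c2\<in>A then D else {})"
  using assms by (auto split: if_splits)

lemma rf_diag: "regret_function xl xh \<psi> \<Longrightarrow> x \<in> {xl..xh} \<Longrightarrow> \<psi> x x = 0"
  unfolding regret_function_def by (elim conjE) (erule bspec)

lemma lot_range: "X \<in> lotteries xl xh \<Longrightarrow> s \<in> {0..1} \<Longrightarrow> X s \<in> {xl..xh}"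
  unfolding lotteries_def by (elim CollectE conjE) (erule subsetD, erule imageI)

lemma lot_simple: "X \<in> lotteries xl xh \<Longrightarrow> simple_function PS X"
  unfolding lotteries_def by (elim CollectE conjE) (rule simple_function_borel_measurable, simp_all)

lemma psi_meas: "X \<in> lotteries xl xh \<Longrightarrow> Y \<in> lotteries xl xh \<Longrightarrow>
   (\<lambda>s. \<psi> (X s) (Y s)) \<in> borel_measurable PS"
  by (rule borel_measurable_simple_function, rule simple_function_compose2[OF lot_simple lot_simple])

lemma swap_distr:
  assumes rf: "regret_function xl xh \<psi>" and Z: "Z \<in> lotteries xl xh" and Z': "Z' \<in> lotteries xl xh"
    and E: "E \<in> sets PS" and D: "D \<in> sets PS" and ED: "E \<inter> D = {}"
    and mED: "measure PS E = measure PS D"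
    and onE: "\<forall>s\<in>E. Z s = a \<and> Z' s = b" and onD: "\<forall>s\<in>D. Z s = b \<and> Z' s = a"
    and rest: "\<forall>s\<in>{0..1}-E-D. Z' s = Z s"
  shows "regret_lottery \<psi> Z Z' = regret_lottery \<psi> Z' Z"
  unfolding regret_lottery_def
proof (rule measure_eqI)
  fix A assume "A \<in> sets (distr PS borel (\<lambda>s. \<psi> (Z s) (Z' s)))"
  hence A: "A \<in> sets borel" by simp
  have Es: "E \<subseteq> {0..1}" and Ds: "D \<subseteq> {0..1}" using E D by (auto simp: sets_PS_iff)
  have zero: "\<psi> (Z s) (Z s) = 0" if "s \<in> {0..1}" for s
    using rf_diag[OF rf lot_range[OF Z that]] .
  define R0 where "R0 = (if 0\<in>A then space PS - E - D else {})"
  define E1 where "E1 = (if \<psi> a b\<in>A then E else {})"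
  define D1 where "D1 = (if \<psi> b a\<in>A then D else {})"
  define E2 where "E2 = (if \<psi> b a\<in>A then E else {})"
  define D2 where "D2 = (if \<psi> a b\<in>A then D else {})"
  have val1: "\<psi> (Z s) (Z' s) = (if s\<in>E then \<psi> a b else if s\<in>D then \<psi> b a else 0)"
    if "s \<in> {0..1}" for s
  proof (cases "s \<in> E")
    case True thus ?thesis using onE by simp
  next
    case F: False show ?thesis
    proof (cases "s \<in> D")
      case True thus ?thesis using onD F by simp
    next
      case False thus ?thesis using F rest zero[OF that] that by simp
    qed
  qed
  have val2: "\<psi> (Z' s) (Z s) = (if s\<in>E then \<psi> b a else if s\<in>D then \<psi> a b else 0)"
    if "s \<in> {0..1}" for s
  proof (cases "s \<in> E")
    case True thus ?thesis using onE by simp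
  next
    case F: False show ?thesis
    proof (cases "s \<in> D")
      case True thus ?thesis using onD F by simp
    next
      case False thus ?thesis using F rest zero[OF that] that by simp
    qed
  qed
  have s1: "(\<lambda>s. \<psi> (Z s) (Z' s)) -` A \<inter> space PS = R0 \<union> E1 \<union> D1"
    unfolding R0_def E1_def D1_def space_PS
    by (rule piece_vimage) (use val1 Es Ds ED in auto)
  have s2: "(\<lambda>s. \<psi> (Z' s) (Z s)) -` A \<inter> space PS = R0 \<union> E2 \<union> D2"
    unfolding R0_def E2_def D2_def space_PS
    by (rule piece_vimage) (use val2 Es Ds ED in auto)
  have mR0: "R0 \<in> sets PS" unfolding R0_def using E D by (metis sets.Diff sets.empty_sets sets.top)
  have mE1: "E1 \<in> sets PS" "E2 \<in> sets PS" "D1 \<in> sets PS" "D2 \<in> sets PS"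
    unfolding E1_def E2_def D1_def D2_def using E D by simp_all
  have eq1: "measure PS E1 = measure PS D2" unfolding E1_def D2_def using mED by simp
  have eq2: "measure PS D1 = measure PS E2" unfolding E2_def D1_def using mED by simp
  have ED': "\<And>x. x \<in> E \<Longrightarrow> x \<notin> D" using ED by auto
  have d1: "R0 \<inter> E1 = {}" "(R0 \<union> E1) \<inter> D1 = {}" "R0 \<inter> E2 = {}" "(R0 \<union> E2) \<inter> D2 = {}"
    unfolding R0_def E1_def D1_def E2_def D2_def using ED' by (simp_all, blast+)
  have "measure PS (R0 \<union> E1 \<union> D1) = measure PS R0 + measure PS E1 + measure PS D1"
    using d1 mR0 mE1 by (simp add: PSp.finite_measure_Union)
  moreover have "measure PS (R0 \<union> E2 \<union> D2) = measure PS R0 + measure PS E2 + measure PS D2"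
    using d1 mR0 mE1 by (simp add: PSp.finite_measure_Union)
  ultimately have "measure PS (R0 \<union> E1 \<union> D1) = measure PS (R0 \<union> E2 \<union> D2)"
    using eq1 eq2 by simp
  thus "emeasure (distr PS borel (\<lambda>s. \<psi> (Z s) (Z' s))) A =
        emeasure (distr PS borel (\<lambda>s. \<psi> (Z' s) (Z s))) A"
    using A psi_meas[where \<psi>=\<psi>, OF Z Z'] psi_meas[where \<psi>=\<psi>, OF Z' Z]
    using s1 s2 by (simp add: emeasure_distr PSp.emeasure_eq_measure)
qed simp


lemma setA: assumes "E \<subseteq> XA" "D \<subseteq> XB" "E \<inter> D = {}" "a \<noteq> b" "XA = {s\<in>\<Omega>. X s = a}" "XB = {s\<in>\<Omega>. X s = b}"
  shows "{s\<in>\<Omega>. (if s\<in>E then b else if s\<in>D then a else X s) = a} = (XA - E) \<union> D"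
  using assms by auto
lemma setB: assumes "E \<subseteq> XA" "D \<subseteq> XB" "E \<inter> D = {}" "a \<noteq> b" "XA = {s\<in>\<Omega>. X s = a}" "XB = {s\<in>\<Omega>. X s = b}"
  shows "{s\<in>\<Omega>. (if s\<in>E then b else if s\<in>D then a else X s) = b} = (XB - D) \<union> E"
  using assms by auto
lemma setC: assumes "E \<subseteq> XA" "D \<subseteq> XB" "c \<noteq> a" "c \<noteq> b" "XA = {s\<in>\<Omega>. X s = a}" "XB = {s\<in>\<Omega>. X s = b}"
  shows "{s\<in>\<Omega>. (if s\<in>E then b else if s\<in>D then a else X s) = c} = {s\<in>\<Omega>. X s = c}"
  using assms by auto

definition margeq :: "(real \<Rightarrow> real) \<Rightarrow> (real \<Rightarrow> real) \<Rightarrow> bool" where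
  "margeq X Y \<longleftrightarrow> (\<forall>c. measure PS {s\<in>space PS. X s = c} = measure PS {s\<in>space PS. Y s = c})"

lemma lot_meas: "X \<in> lotteries xl xh \<Longrightarrow> X \<in> borel_measurable PS"
  unfolding lotteries_def by (elim CollectE conjE)

lemma lot_fin: "X \<in> lotteries xl xh \<Longrightarrow> finite (X ` {0..1})"
  unfolding lotteries_def by (elim CollectE conjE)

lemma lot_eq_sets: "X \<in> lotteries xl xh \<Longrightarrow> {s\<in>space PS. X s = c} \<in> sets PS"
proof -
  assume "X \<in> lotteries xl xh"
  hence "X -` {c} \<inter> space PS \<in> sets PS" by (intro measurable_sets[OF lot_meas]) auto
  moreover have "X -` {c} \<inter> space PS = {s\<in>space PS. X s = c}" by auto
  ultimately show ?thesis by simp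
qed

lemma lotI:
  assumes "X \<in> borel_measurable PS" "\<And>s. s \<in> {0..1} \<Longrightarrow> X s \<in> {xl..xh}" "finite (X ` {0..1})"
  shows "X \<in> lotteries xl xh"
  unfolding lotteries_def using assms by blast

lemma swap_indiff:
  assumes cmp: "complete_pref xl xh R" and rf: "regret_function xl xh \<psi>"
    and hR: "\<forall>X\<in>lotteries xl xh. \<forall>Y\<in>lotteries xl xh. R X Y \<longleftrightarrow> V (regret_lottery \<psi> X Y) \<ge> 0"
    and Z: "Z \<in> lotteries xl xh" and Z': "Z' \<in> lotteries xl xh"
    and E: "E \<in> sets PS" and D: "D \<in> sets PS" and ED: "E \<inter> D = {}"
    and mED: "measure PS E = measure PS D"
    and onE: "\<forall>s\<in>E. Z s = a \<and> Z' s = b" and onD: "\<forall>s\<in>D. Z s = b \<and> Z' s = a"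
    and rest: "\<forall>s\<in>{0..1}-E-D. Z' s = Z s"
  shows "R Z Z' \<and> R Z' Z"
proof -
  have eq: "regret_lottery \<psi> Z Z' = regret_lottery \<psi> Z' Z"
    by (rule swap_distr[OF rf Z Z' E D ED mED onE onD rest])
  have "R Z Z' \<or> R Z' Z" using cmp Z Z' unfolding complete_pref_def by blast
  moreover have "R Z Z' \<longleftrightarrow> R Z' Z" using hR Z Z' eq by simp
  ultimately show ?thesis by blast
qed

lemma move:
  assumes cmp: "complete_pref xl xh R" and rf: "regret_function xl xh \<psi>"
    and hR: "\<forall>X\<in>lotteries xl xh. \<forall>Y\<in>lotteries xl xh. R X Y \<longleftrightarrow> V (regret_lottery \<psi> X Y) \<ge> 0"
    and X: "X \<in> lotteries xl xh" and Y: "Y \<in> lotteries xl xh" and mg: "margeq X Y"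
    and s0: "s0 \<in> {0..1}" "Y s0 = b" "X s0 = a" and ab: "a \<noteq> b"
  shows "\<exists>X'. X' \<in> lotteries xl xh \<and> margeq X' Y \<and> R X X' \<and> R X' X \<and>
    (\<forall>s\<in>{0..1}. X s = Y s \<longrightarrow> X' s = X s) \<and>
    (\<forall>s\<in>{0..1}. Y s = b \<longrightarrow> X' s \<noteq> b \<longrightarrow> X' s = X s \<and> X s \<noteq> a)"
proof -
  define XA where "XA = {s\<in>space PS. X s = a}"
  define XB where "XB = {s\<in>space PS. X s = b}"
  define YB where "YB = {s\<in>space PS. Y s = b}"
  have mXA: "XA \<in> sets PS" and mXB: "XB \<in> sets PS" and mYB: "YB \<in> sets PS"
    unfolding XA_def XB_def YB_def using lot_eq_sets[OF X] lot_eq_sets[OF Y] by blast+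
  define E where "E = XA \<inter> YB"
  define G where "G = XB - YB"
  have mE: "E \<in> sets PS" and mG: "G \<in> sets PS" unfolding E_def G_def using mXA mXB mYB by auto
  have "measure PS E \<le> measure PS (YB - XB)"
    using ab mXB mYB unfolding E_def XA_def XB_def YB_def
    by (intro PSp.finite_measure_mono) auto
  also have "\<dots> = measure PS YB - measure PS (YB \<inter> XB)"
    using mYB mXB by (rule PSp.finite_measure_Diff')
  also have "\<dots> = measure PS XB - measure PS (XB \<inter> YB)"
    using mg unfolding margeq_def XB_def YB_def by (simp add: Int_commute)
  also have "\<dots> = measure PS G"
    unfolding G_def using mXB mYB by (rule PSp.finite_measure_Diff'[symmetric])
  finally have EG: "measure PS E \<le> measure PS G" .
  obtain D where mD: "D \<in> sets PS" and DG: "D \<subseteq> G" and mED: "measure PS D = measure PS E"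
    using split_set[OF mG _ EG] by auto
  have Es: "E \<subseteq> {0..1}" and Ds: "D \<subseteq> {0..1}" using mE mD by (auto simp: sets_PS_iff)
  have ED: "E \<inter> D = {}" using DG unfolding E_def G_def by auto
  have EXA: "E \<subseteq> XA" unfolding E_def by auto
  have DXB: "D \<subseteq> XB" using DG unfolding G_def by auto
  define X' where "X' = (\<lambda>s. if s\<in>E then b else if s\<in>D then a else X s)"
  have abr: "a \<in> {xl..xh}" "b \<in> {xl..xh}" using lot_range[OF X s0(1)] lot_range[OF Y s0(1)] s0 by auto
  have X'L: "X' \<in> lotteries xl xh"
  proof (rule lotI)
    show "X' \<in> borel_measurable PS" unfolding X'_def
      using mE mD Es Ds lot_meas[OF X]
      by (intro measurable_If_set) (auto simp: Int_absorb2)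
    show "X' s \<in> {xl..xh}" if "s \<in> {0..1}" for s
      unfolding X'_def using abr lot_range[OF X that] by auto
    have "X' ` {0..1} \<subseteq> insert a (insert b (X ` {0..1}))" unfolding X'_def by auto
    thus "finite (X' ` {0..1})" using lot_fin[OF X] finite_subset by blast
  qed
  have ind: "R X X' \<and> R X' X"
  proof (rule swap_indiff[OF cmp rf hR X X'L mE mD ED mED[symmetric]])
    show "\<forall>s\<in>E. X s = a \<and> X' s = b" unfolding X'_def E_def XA_def by auto
    show "\<forall>s\<in>D. X s = b \<and> X' s = a" unfolding X'_def using DXB ED unfolding XB_def by auto
    show "\<forall>s\<in>{0..1}-E-D. X' s = X s" unfolding X'_def by auto
  qed
  have mg': "margeq X' Y" unfolding margeq_def
  proof
    fix c
    have "measure PS {s\<in>space PS. X' s = c} = measure PS {s\<in>space PS. X s = c}"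
    proof (cases "c = a")
      case True
      have "{s\<in>space PS. X' s = c} = (XA - E) \<union> D"
        unfolding X'_def True by (rule setA[OF EXA DXB ED ab XA_def XB_def])
      moreover have "measure PS ((XA - E) \<union> D) = measure PS (XA - E) + measure PS D"
        using mXA mE mD ED DXB ab unfolding XA_def XB_def
        by (intro PSp.finite_measure_Union) auto
      moreover have "measure PS (XA - E) = measure PS XA - measure PS E"
        using mXA mE EXA by (rule PSp.finite_measure_Diff)
      ultimately show ?thesis using mED True XA_def by simp
    next
      case ca: False
      show ?thesis
      proof (cases "c = b")
        case True
        have "{s\<in>space PS. X' s = c} = (XB - D) \<union> E"
          unfolding X'_def True by (rule setB[OF EXA DXB ED ab XA_def XB_def])
        moreover have "measure PS ((XB - D) \<union> E) = measure PS (XB - D) + measure PS E"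
          using mXB mE mD ED EXA ab unfolding XA_def XB_def
          by (intro PSp.finite_measure_Union) auto
        moreover have "measure PS (XB - D) = measure PS XB - measure PS D"
          using mXB mD DXB by (rule PSp.finite_measure_Diff)
        ultimately show ?thesis using mED True XB_def by simp
      next
        case False
        show ?thesis unfolding X'_def by (subst setC[OF EXA DXB ca False XA_def XB_def]) (rule refl)
      qed
    qed
    thus "measure PS {s\<in>space PS. X' s = c} = measure PS {s\<in>space PS. Y s = c}"
      using mg unfolding margeq_def by simp
  qed
  have agr: "\<forall>s\<in>{0..1}. X s = Y s \<longrightarrow> X' s = X s"
    unfolding X'_def E_def XA_def YB_def using DG ab unfolding G_def XB_def YB_def by auto
  have last: "\<forall>s\<in>{0..1}. Y s = b \<longrightarrow> X' s \<noteq> b \<longrightarrow> X' s = X s \<and> X s \<noteq> a"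
    unfolding X'_def E_def XA_def YB_def using DG unfolding G_def XB_def YB_def by auto
  show ?thesis using X'L mg' ind agr last by blast
qed

lemma inner:
  assumes cmp: "complete_pref xl xh R" and tr: "transitive_pref xl xh R" and rf: "regret_function xl xh \<psi>"
    and hR: "\<forall>X\<in>lotteries xl xh. \<forall>Y\<in>lotteries xl xh. R X Y \<longleftrightarrow> V (regret_lottery \<psi> X Y) \<ge> 0"
    and Y: "Y \<in> lotteries xl xh"
  shows "X \<in> lotteries xl xh \<Longrightarrow> margeq X Y \<Longrightarrow> card (X ` {s\<in>{0..1}. Y s = b \<and> X s \<noteq> b}) = n \<Longrightarrow>
    \<exists>X'. X' \<in> lotteries xl xh \<and> margeq X' Y \<and> R X X' \<and> R X' X \<and>
    (\<forall>s\<in>{0..1}. X s = Y s \<longrightarrow> X' s = X s) \<and> (\<forall>s\<in>{0..1}. Y s = b \<longrightarrow> X' s = b)"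
proof (induction n arbitrary: X rule: less_induct)
  case (less n X)
  note X = less.prems(1)
  have RXX: "R X X" using cmp X unfolding complete_pref_def by blast
  show ?case
  proof (cases "X ` {s\<in>{0..1}. Y s = b \<and> X s \<noteq> b} = {}")
    case True
    hence "\<forall>s\<in>{0..1}. Y s = b \<longrightarrow> X s = b" by auto
    thus ?thesis using X less.prems(2) RXX by blast
  next
    case False
    then obtain s0 where s0: "s0 \<in> {0..1}" "Y s0 = b" "X s0 \<noteq> b" by auto
    obtain X1 where X1: "X1 \<in> lotteries xl xh" "margeq X1 Y" "R X X1" "R X1 X"
      and agr1: "\<forall>s\<in>{0..1}. X s = Y s \<longrightarrow> X1 s = X s"
      and last1: "\<forall>s\<in>{0..1}. Y s = b \<longrightarrow> X1 s \<noteq> b \<longrightarrow> X1 s = X s \<and> X s \<noteq> X s0"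
      using move[OF cmp rf hR X Y less.prems(2) s0(1,2) refl s0(3)] by blast
    have sub: "X1 ` {s\<in>{0..1}. Y s = b \<and> X1 s \<noteq> b} \<subseteq> X ` {s\<in>{0..1}. Y s = b \<and> X s \<noteq> b} - {X s0}"
    proof
      fix v assume "v \<in> X1 ` {s\<in>{0..1}. Y s = b \<and> X1 s \<noteq> b}"
      then obtain s where s: "s \<in> {0..1}" "Y s = b" "X1 s \<noteq> b" "v = X1 s" by blast
      have "X1 s = X s \<and> X s \<noteq> X s0" using last1 s by blast
      thus "v \<in> X ` {s\<in>{0..1}. Y s = b \<and> X s \<noteq> b} - {X s0}" using s by auto
    qed
    have fin: "finite (X ` {s\<in>{0..1}. Y s = b \<and> X s \<noteq> b})"
      using lot_fin[OF X] by (rule finite_subset[rotated]) auto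
    have "X s0 \<in> X ` {s\<in>{0..1}. Y s = b \<and> X s \<noteq> b}" using s0 by auto
    hence "card (X1 ` {s\<in>{0..1}. Y s = b \<and> X1 s \<noteq> b}) < n"
      using sub fin less.prems(3)
      by (metis (no_types, lifting) card_Diff1_less card_mono finite_Diff order_le_less_trans)
    then obtain X2 where X2: "X2 \<in> lotteries xl xh" "margeq X2 Y" "R X1 X2" "R X2 X1"
      and agr2: "\<forall>s\<in>{0..1}. X1 s = Y s \<longrightarrow> X2 s = X1 s"
      and fin2: "\<forall>s\<in>{0..1}. Y s = b \<longrightarrow> X2 s = b"
      using less.IH[OF _ X1(1,2) refl] by blast
    have T: "\<And>A B C. A \<in> lotteries xl xh \<Longrightarrow> B \<in> lotteries xl xh \<Longrightarrow> C \<in> lotteries xl xh \<Longrightarrow> R A B \<Longrightarrow> R B C \<Longrightarrow> R A C"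
      using tr unfolding transitive_pref_def by blast
    have "R X X2" by (rule T[OF X X1(1) X2(1) X1(3) X2(3)])
    moreover have "R X2 X" by (rule T[OF X2(1) X1(1) X X2(4) X1(4)])
    moreover have "\<forall>s\<in>{0..1}. X s = Y s \<longrightarrow> X2 s = X s" using agr1 agr2 by auto
    ultimately show ?thesis using X2 fin2 by blast
  qed
qed

lemma outer:
  assumes cmp: "complete_pref xl xh R" and tr: "transitive_pref xl xh R" and rf: "regret_function xl xh \<psi>"
    and hR: "\<forall>X\<in>lotteries xl xh. \<forall>Y\<in>lotteries xl xh. R X Y \<longleftrightarrow> V (regret_lottery \<psi> X Y) \<ge> 0"
    and Y: "Y \<in> lotteries xl xh"
  shows "X \<in> lotteries xl xh \<Longrightarrow> margeq X Y \<Longrightarrow> card (Y ` {s\<in>{0..1}. X s \<noteq> Y s}) = n \<Longrightarrow>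
    R X Y \<and> R Y X"
proof (induction n arbitrary: X rule: less_induct)
  case (less n X)
  note X = less.prems(1)
  show ?case
  proof (cases "Y ` {s\<in>{0..1}. X s \<noteq> Y s} = {}")
    case True
    hence eqs: "\<And>s. s \<in> space PS \<Longrightarrow> X s = Y s" by auto
    have RXX: "R X X" using cmp X unfolding complete_pref_def by blast
    have e1: "regret_lottery \<psi> X Y = regret_lottery \<psi> X X"
      unfolding regret_lottery_def by (rule distr_cong) (simp_all add: eqs)
    have e2: "regret_lottery \<psi> Y X = regret_lottery \<psi> X X"
      unfolding regret_lottery_def by (rule distr_cong) (simp_all add: eqs)
    have h: "\<And>A B. A \<in> lotteries xl xh \<Longrightarrow> B \<in> lotteries xl xh \<Longrightarrow> R A B \<longleftrightarrow> V (regret_lottery \<psi> A B) \<ge> 0"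
      using hR by blast
    have v: "V (regret_lottery \<psi> X X) \<ge> 0" using h[OF X X] RXX by blast
    show ?thesis unfolding h[OF X Y] h[OF Y X] e1 e2 using v by blast
  next
    case False
    then obtain s0 where s0: "s0 \<in> {0..1}" "X s0 \<noteq> Y s0" by auto
    obtain X1 where X1: "X1 \<in> lotteries xl xh" "margeq X1 Y" "R X X1" "R X1 X"
      and agr1: "\<forall>s\<in>{0..1}. X s = Y s \<longrightarrow> X1 s = X s"
      and fin1: "\<forall>s\<in>{0..1}. Y s = Y s0 \<longrightarrow> X1 s = Y s0"
      using inner[where b="Y s0", OF cmp tr rf hR Y X less.prems(2) refl] by blast
    have sub: "Y ` {s\<in>{0..1}. X1 s \<noteq> Y s} \<subseteq> Y ` {s\<in>{0..1}. X s \<noteq> Y s} - {Y s0}"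
    proof
      fix v assume "v \<in> Y ` {s\<in>{0..1}. X1 s \<noteq> Y s}"
      then obtain s where s: "s \<in> {0..1}" "X1 s \<noteq> Y s" "v = Y s" by blast
      have "X s \<noteq> Y s" using agr1 s by metis
      moreover have "Y s \<noteq> Y s0" using fin1 s by metis
      ultimately show "v \<in> Y ` {s\<in>{0..1}. X s \<noteq> Y s} - {Y s0}" using s by auto
    qed
    have fin: "finite (Y ` {s\<in>{0..1}. X s \<noteq> Y s})"
      using lot_fin[OF Y] by (rule finite_subset[rotated]) auto
    have "Y s0 \<in> Y ` {s\<in>{0..1}. X s \<noteq> Y s}" using s0 by auto
    hence "card (Y ` {s\<in>{0..1}. X1 s \<noteq> Y s}) < n"
      using sub fin less.prems(3)
      by (metis (no_types, lifting) card_Diff1_less card_mono finite_Diff order_le_less_trans)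
    then have IH: "R X1 Y \<and> R Y X1"
      using less.IH[OF _ X1(1,2) refl] by blast
    have T: "\<And>A B C. A \<in> lotteries xl xh \<Longrightarrow> B \<in> lotteries xl xh \<Longrightarrow> C \<in> lotteries xl xh \<Longrightarrow> R A B \<Longrightarrow> R B C \<Longrightarrow> R A C"
      using tr unfolding transitive_pref_def by blast
    have "R X Y" using IH by (intro T[OF X X1(1) Y X1(3)]) blast
    moreover have "R Y X" using IH by (intro T[OF Y X1(1) X _ X1(4)]) blast
    ultimately show ?thesis by blast
  qed
qed

lemma margeq_of_cdf:
  assumes X: "X \<in> lotteries xl xh" and Y: "Y \<in> lotteries xl xh" and c: "cdf_of X = cdf_of Y"
  shows "margeq X Y"
proof -
  have rd: "real_distribution (distr PS borel Z)" if "Z \<in> lotteries xl xh" for Z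
    unfolding real_distribution_def real_distribution_axioms_def
    using PSp.prob_space_distr[OF lot_meas[OF that]] sets_distr by blast
  have eq: "distr PS borel X = distr PS borel Y"
    using cdf_unique[OF rd[OF X] rd[OF Y]] c unfolding cdf_of_def by simp
  show ?thesis unfolding margeq_def
  proof
    fix c
    have vx: "X -` {c} \<inter> space PS = {s\<in>space PS. X s = c}" by blast
    have vy: "Y -` {c} \<inter> space PS = {s\<in>space PS. Y s = c}" by blast
    have "measure PS {s\<in>space PS. X s = c} = measure (distr PS borel X) {c}"
      using measure_distr[OF lot_meas[OF X], of "{c}"] vx by simp
    also have "\<dots> = measure (distr PS borel Y) {c}" using eq by simp
    also have "\<dots> = measure PS {s\<in>space PS. Y s = c}"
      using measure_distr[OF lot_meas[OF Y], of "{c}"] vy by simp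
    finally show "measure PS {s\<in>space PS. X s = c} = measure PS {s\<in>space PS. Y s = c}" .
  qed
qed

theorem proposition1:
  fixes xl xh :: real
    and R :: "(real \<Rightarrow> real) \<Rightarrow> (real \<Rightarrow> real) \<Rightarrow> bool"
  assumes "complete_pref xl xh R"
    and "transitive_pref xl xh R"
    and "continuous_in_prob xl xh R"
    and "statewise_monotone xl xh R"
    and "regret_based xl xh R"
    and "X \<in> lotteries xl xh" and "Y \<in> lotteries xl xh"
    and "cdf_of X = cdf_of Y"
  shows "R X Y \<and> R Y X"
proof -
  obtain \<psi> V where rf: "regret_function xl xh \<psi>"
    and hR: "\<forall>X\<in>lotteries xl xh. \<forall>Y\<in>lotteries xl xh. R X Y \<longleftrightarrow> V (regret_lottery \<psi> X Y) \<ge> 0"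
    and "lottery_continuous (regret_lotteries xl xh \<psi>) V"
    using assms(5) unfolding regret_based_def by (elim exE conjE) (rule that)
  show ?thesis
    using outer[OF assms(1,2) rf hR assms(7) assms(6) margeq_of_cdf[OF assms(6,7,8)] refl] .
qed

end
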